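(* Let $n\ge 1$, let $\Omega_1,\ldots,\Omega_n$ be finite sets with $|\Omega_i|=k_i\ge 1$, and let $\Omega=\prod_{i=1}^n\Omega_i$. Let $M\ge 0$ and let $f:\Omega\to[0,M]$ be weakly nested canalizing (WNC) on $\Omega$. Put $\kappa=\max_i (k_i-1)/k_i$, so that $\kappa<1$. Then $$\operatorname{AS}[f]\le \frac{M^2}{4(1-\kappa)}.$$ In particular this holds for every nested canalizing function $f:(\mathbb{Z}/k\mathbb{Z})^n\to\mathbb{Z}/k\mathbb{Z}$, with values viewed as the real numbers $0,\ldots,k-1$ (here $M=k-1$ and $\kappa=(k-1)/k$).
   Context: Let $\Omega_1,\ldots,\Omega_n$ be finite sets with $|\Omega_i|=k_i\ge1$ (sizes $k_i=1$ are allowed), $\Omega=\prod_i\Omega_i$, and let $f:\Omega\to\mathbb{R}$. Weakly canalizing: $f$ is weakly canalizing with respect to coordinate $i$ and $(a,b)\in\Omega_i\times\mathbb{R}$ if $f(x)=b$ for every $x\in\Omega$ with $x_i=a$. No condition is imposed on the values of $f$ when $x_i\ne a$; in particular constant functions are weakly canalizing. Restriction: if $k_i\ge2$, then $f\restriction_{x_i\ne a}$ denotes the restriction of $f$ to $\Omega\cap\{x: x_i\ne a\}=\Omega_1\times\cdots\times(\Omega_i\setminus\{a\})\times\cdots\times\Omega_n$, regarded again as a product of finite sets. WNC, defined by induction on $|\Omega|$: if $|\Omega|=1$, every $f$ is WNC on $\Omega$. If $|\Omega|>1$, $f$ is WNC on $\Omega$ if it is weakly canalizing with respect to some $i,a,b$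 with $k_i\ge2$ and $f\restriction_{x_i\ne a}$ is WNC on $\Omega\cap\{x:x_i\ne a\}$. Nested canalizing (NC): a segment is a subset of $\mathbb{Z}/k\mathbb{Z}=\{0,\ldots,k-1\}$ of the form $\{0,\ldots,i\}$ or $\{i,\ldots,k-1\}$. A function $f:(\mathbb{Z}/k\mathbb{Z})^n\to\mathbb{Z}/k\mathbb{Z}$ (with $k\ge2$) is NC if there exist a permutation $\sigma$ of $\{1,\ldots,n\}$, segments $A_1,\ldots,A_n$ and values $c_1,\ldots,c_{n+1}\in\mathbb{Z}/k\mathbb{Z}$ with $c_n\ne c_{n+1}$ such that: - $f(x)=c_r$ whenever $x_{\sigma(1)}\notin A_1,\ldots,x_{\sigma(r-1)}\notin A_{r-1}$ and $x_{\sigma(r)}\in A_r$, for $1\le r\le n$; - $f(x)=c_{n+1}$ whenever $x_{\sigma(r)}\notin A_r$ for all $r$. Average sensitivity: $\Omega$ carries the uniform product probability measure. For $x\in\Omega$ and a coordinate $i$, let $\operatorname{Var}_i[f](x)$ be the variance of $y_i\mapsto f(x_1,\ldots,x_{i-1},y_i,x_{i+1},\ldots,x_n)$ for $y_i$ uniform on $\Omega_i$. The influence of coordinate $i$ is $\operatorname{Inf}_i[f]=\mathbf{E}_x[\operatorname{Var}_i[f](x)]$. This equals the Fourier-analytic definition $\langle f,L_if\rangle=\sum_{\alpha_i\ne0}\hat f(\alpha)^2$ for any orthonormal basis $(\phi_\alpha)$ with $\phi_0=1$. The average sensitivity (total influence) is $\operatorname{AS}[f]=\sum_{i=1}^n\operatorname{Inf}_i[f]$.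 *)

theory Defs
  imports "HOL-Library.FuncSet" "HOL-Combinatorics.Permutations" Complex_Main
begin

text \<open>A product space Omega = Omega_0 x ... x Omega_(n-1) is represented by n and a family
  Om :: nat => 'a set; its points are the extensional functions in PiE {..<n} Om.\<close>

abbreviation prodsp :: "nat \<Rightarrow> (nat \<Rightarrow> 'a set) \<Rightarrow> (nat \<Rightarrow> 'a) set" where
  "prodsp n Om \<equiv> PiE {..<n} Om"

definition weakly_canalizing ::
  "nat \<Rightarrow> (nat \<Rightarrow> 'a set) \<Rightarrow> ((nat \<Rightarrow> 'a) \<Rightarrow> real) \<Rightarrow> nat \<Rightarrow> 'a \<Rightarrow> real \<Rightarrow> bool" where
  "weakly_canalizing n Om f i a b \<longleftrightarrow> (\<forall>x\<in>prodsp n Om. x i = a \<longrightarrow> f x = b)"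

text \<open>Weakly nested canalizing, inductively (each step strictly shrinks the domain).
  The restriction of f to {x_i ~= a} is f regarded on the smaller product space.\<close>
inductive WNC :: "nat \<Rightarrow> (nat \<Rightarrow> 'a set) \<Rightarrow> ((nat \<Rightarrow> 'a) \<Rightarrow> real) \<Rightarrow> bool" where
  base: "card (prodsp n Om) = 1 \<Longrightarrow> WNC n Om f"
| step: "\<lbrakk> card (prodsp n Om) > 1; i < n; card (Om i) \<ge> 2; a \<in> Om i;
           weakly_canalizing n Om f i a b;
           WNC n (Om(i := Om i - {a})) f \<rbrakk> \<Longrightarrow> WNC n Om f"

definition coord_var ::
  "(nat \<Rightarrow> 'a set) \<Rightarrow> ((nat \<Rightarrow> 'a) \<Rightarrow> real) \<Rightarrow> nat \<Rightarrow> (nat \<Rightarrow> 'a) \<Rightarrow> real" where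
  "coord_var Om f i x =
     (let m = (\<Sum>y\<in>Om i. f (x(i := y))) / real (card (Om i))
      in (\<Sum>y\<in>Om i. (f (x(i := y)) - m)^2) / real (card (Om i)))"

definition influence ::
  "nat \<Rightarrow> (nat \<Rightarrow> 'a set) \<Rightarrow> ((nat \<Rightarrow> 'a) \<Rightarrow> real) \<Rightarrow> nat \<Rightarrow> real" where
  "influence n Om f i =
     (\<Sum>x\<in>prodsp n Om. coord_var Om f i x) / real (card (prodsp n Om))"

definition avg_sensitivity ::
  "nat \<Rightarrow> (nat \<Rightarrow> 'a set) \<Rightarrow> ((nat \<Rightarrow> 'a) \<Rightarrow> real) \<Rightarrow> real" where
  "avg_sensitivity n Om f = (\<Sum>i<n. influence n Om f i)"

definition segment :: "nat \<Rightarrow> nat set \<Rightarrow> bool" where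
  "segment k A \<longleftrightarrow> (\<exists>i<k. A = {0..i} \<or> A = {i..k-1})"

text \<open>Nested canalizing functions (Z/kZ)^n -> Z/kZ; coordinates and the permutation are
  0-indexed, the values c_1..c_(n+1) become c 0 .. c n.\<close>
definition nested_canalizing :: "nat \<Rightarrow> nat \<Rightarrow> ((nat \<Rightarrow> nat) \<Rightarrow> nat) \<Rightarrow> bool" where
  "nested_canalizing k n f \<longleftrightarrow>
     (\<exists>\<sigma> A c. \<sigma> permutes {..<n} \<and> (\<forall>r<n. segment k (A r)) \<and> (\<forall>r\<le>n. c r < k) \<and>
        c (n - 1) \<noteq> c n \<and>
        (\<forall>x\<in>PiE {..<n} (\<lambda>_. {..<k}).
           (\<forall>r<n. (\<forall>s<r. x (\<sigma> s) \<notin> A s) \<and> x (\<sigma> r) \<in> A r \<longrightarrow> f x = c r) \<and>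
           ((\<forall>r<n. x (\<sigma> r) \<notin> A r) \<longrightarrow> f x = c n)))"

end

theory Submission
  imports Defs
begin

lemma ident_alg0:
  fixes d D b S1 S2 :: real
  assumes "d \<noteq> 0" "D \<noteq> 0" "D = d + 1"
  shows "(b^2+S2)/D - ((b+S1)/D)^2 = (1 - 1/D)*(S2/d - (S1/d)^2) + (1/D)*(1-1/D)*(b - S1/d)^2"
proof -
  have "(b^2+S2)/D - ((b+S1)/D)^2 = ((b^2+S2)*D - (b+S1)^2) / D^2" using assms(1,2)
    by (simp add: field_simps power2_eq_square)
  moreover have "(1 - 1/D)*(S2/d - (S1/d)^2) + (1/D)*(1-1/D)*(b - S1/d)^2
     = ((D-1)*D*(S2*d - S1^2) + (D-1)*(b*d - S1)^2) / (D^2 * d^2)" using assms(1,2)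
    by (simp add: field_simps power2_eq_square)
  moreover have "((b^2+S2)*D - (b+S1)^2) * (D^2*d^2) = ((D-1)*D*(S2*d - S1^2) + (D-1)*(b*d - S1)^2) * D^2"
    using assms(3) by (simp add: power2_eq_square algebra_simps)
  ultimately show ?thesis using assms(1,2) by (simp add: frac_eq_eq)
qed

definition vr :: "'b set \<Rightarrow> ('b \<Rightarrow> real) \<Rightarrow> real" where
  "vr A v = (let m = (\<Sum>y\<in>A. v y) / real (card A) in (\<Sum>y\<in>A. (v y - m)^2) / real (card A))"

lemma coord_var_vr: "coord_var Om f i x = vr (Om i) (\<lambda>y. f (x(i := y)))"
  unfolding coord_var_def vr_def by simp

lemma vr_alt:
  assumes "finite A" "A \<noteq> {}"
  shows "vr A v = (\<Sum>y\<in>A. (v y)^2) / real (card A) - ((\<Sum>y\<in>A. v y) / real (card A))^2"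
proof -
  define c where "c = real (card A)"
  define m where "m = (\<Sum>y\<in>A. v y) / c"
  have c: "c > 0" using assms by (simp add: c_def card_gt_0_iff)
  have "(\<Sum>y\<in>A. (v y - m)^2) = (\<Sum>y\<in>A. (v y)^2) - 2 * m * (\<Sum>y\<in>A. v y) + c * m^2"
    by (simp add: power2_diff sum.distrib sum_subtractf sum_distrib_left[symmetric] sum_distrib_right[symmetric] c_def algebra_simps)
  moreover have "(\<Sum>y\<in>A. v y) = c * m" using c by (simp add: m_def)
  ultimately show ?thesis using c
    unfolding vr_def Let_def c_def[symmetric] m_def[symmetric]
    by (simp add: field_simps power2_eq_square)
qed

lemma vr_split:
  assumes fin: "finite A" and a: "a \<in> A" and k2: "card A \<ge> 2"
    and bd: "\<And>y. y \<in> A \<Longrightarrow> 0 \<le> v y \<and> v y \<le> M"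
  shows "vr A v \<le> (1 - 1 / real (card A)) * vr (A - {a}) v
            + (1 / real (card A)) * (1 - 1 / real (card A)) * M^2"
proof -
  define k where "k = real (card A)"
  define A' where "A' = A - {a}"
  define S1 where "S1 = (\<Sum>y\<in>A'. v y)"
  define S2 where "S2 = (\<Sum>y\<in>A'. (v y)^2)"
  have cA': "card A' = card A - 1" using a fin by (simp add: A'_def)
  have k': "real (card A') = k - 1" using cA' k2 by (simp add: k_def of_nat_diff)
  have kge: "k \<ge> 2" using k2 by (simp add: k_def)
  have A'ne: "A' \<noteq> {}" using cA' k2 by auto
  have finA': "finite A'" using fin by (simp add: A'_def)
  have s1: "(\<Sum>y\<in>A. v y) = v a + S1" unfolding S1_def A'_def using fin a by (simp add: sum.remove)
  have s2: "(\<Sum>y\<in>A. (v y)^2) = (v a)^2 + S2" unfolding S2_def A'_def using fin a by (simp add: sum.remove)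
  have vA: "vr A v = ((v a)^2 + S2) / k - ((v a + S1) / k)^2"
    using vr_alt[OF fin, of v] a s1 s2 by (auto simp: k_def)
  have vA': "vr A' v = S2 / (k - 1) - (S1 / (k - 1))^2"
    using vr_alt[OF finA' A'ne] by (simp add: k' S1_def S2_def)
  define m' where "m' = S1 / (k - 1)"
  have ident: "vr A v = (1 - 1/k) * vr A' v + (1/k) * (1 - 1/k) * (v a - m')^2"
    unfolding vA vA' m'_def using kge
    by (intro ident_alg0) auto
  have "S1 \<ge> 0" unfolding S1_def using bd by (intro sum_nonneg) (auto simp: A'_def)
  moreover have "S1 \<le> real (card A') * M" unfolding S1_def
    using sum_bounded_above[of A' v M] bd by (auto simp: A'_def)
  ultimately have m'b: "0 \<le> m'" "m' \<le> M" using kge k' by (auto simp: m'_def field_simps)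
  have "\<bar>v a - m'\<bar> \<le> M" using m'b bd[OF a] by auto
  hence sq: "(v a - m')^2 \<le> M^2"
    by (metis abs_ge_zero power2_abs power_mono)
  have "(1/k) * (1 - 1/k) \<ge> 0" using kge by (simp add: field_simps)
  hence "(1/k) * (1 - 1/k) * (v a - m')^2 \<le> (1/k) * (1 - 1/k) * M^2"
    using sq mult_left_mono by blast
  thus ?thesis using ident by (simp add: k_def A'_def)
qed


lemma upd_mem:
  assumes "x \<in> PiE {..<n} Om" "i < n" "y \<in> B"
  shows "x(i := y) \<in> PiE {..<n} (Om(i := B))"
  using assms by (auto simp: PiE_iff extensional_def)

lemma sum_fiber:
  fixes F :: "(nat \<Rightarrow> 'a) \<Rightarrow> real"
  assumes i: "i < n" and fin: "\<And>j. j < n \<Longrightarrow> finite (Om j)"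
    and inv: "\<And>x y. F (x(i := y)) = F x"
  shows "sum F (PiE {..<n} Om) = real (card (Om i)) * sum F ((\<lambda>x. x(i := undefined)) ` PiE {..<n} Om)"
proof -
  let ?S = "PiE {..<n} Om" and ?h = "\<lambda>x::nat\<Rightarrow>'a. x(i := undefined)"
  have finS: "finite ?S" using fin by (intro finite_PiE) auto
  have "sum F ?S = (\<Sum>z\<in>?h ` ?S. sum F {x\<in>?S. ?h x = z})"
    using finS by (rule sum.image_gen)
  also have "\<dots> = (\<Sum>z\<in>?h ` ?S. real (card (Om i)) * F z)"
  proof (rule sum.cong[OF refl])
    fix z assume "z \<in> ?h ` ?S"
    then obtain x0 where x0: "x0 \<in> ?S" "z = ?h x0" by auto
    have fib: "{x\<in>?S. ?h x = z} = (\<lambda>y. z(i := y)) ` Om i"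
    proof
      show "{x\<in>?S. ?h x = z} \<subseteq> (\<lambda>y. z(i := y)) ` Om i"
      proof
        fix x assume "x \<in> {x\<in>?S. ?h x = z}"
        hence xs: "x \<in> ?S" "?h x = z" by auto
        have "x = (x(i := undefined))(i := x i)" by simp
        hence "x = z(i := x i)" using xs(2) by simp
        moreover have "x i \<in> Om i" using xs i by (auto simp: PiE_iff)
        ultimately show "x \<in> (\<lambda>y. z(i := y)) ` Om i" by blast
      qed
      show "(\<lambda>y. z(i := y)) ` Om i \<subseteq> {x\<in>?S. ?h x = z}"
      proof
        fix x assume "x \<in> (\<lambda>y. z(i := y)) ` Om i"
        then obtain y where y: "y \<in> Om i" "x = z(i := y)" by auto
        have "x = x0(i := y)" using y x0 by auto
        hence "x \<in> ?S" using upd_mem[OF x0(1) i y(1)] by simp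
        moreover have "?h x = z" using y x0 by auto
        ultimately show "x \<in> {x\<in>?S. ?h x = z}" by simp
      qed
    qed
    have "sum F {x\<in>?S. ?h x = z} = sum (\<lambda>y. F (z(i := y))) (Om i)"
      unfolding fib by (rule sum.reindex_cong[where l="\<lambda>y. z(i := y)"]) (auto simp: inj_on_def fun_eq_iff)
    also have "\<dots> = sum (\<lambda>y. F z) (Om i)" by (simp add: inv)
    finally show "sum F {x\<in>?S. ?h x = z} = real (card (Om i)) * F z" by simp
  qed
  also have "\<dots> = real (card (Om i)) * sum F (?h ` ?S)" by (simp add: sum_distrib_left)
  finally show ?thesis .
qed

lemma img_eq:
  assumes i: "i < n" and ne: "Om i \<noteq> {}" "B \<noteq> {}"
  shows "(\<lambda>x. x(i := undefined)) ` PiE {..<n} Om = (\<lambda>x. x(i := undefined)) ` PiE {..<n} (Om(i := B))"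
proof -
  have sub: "(\<lambda>x. x(i := undefined)) ` PiE {..<n} O1 \<subseteq> (\<lambda>x. x(i := undefined)) ` PiE {..<n} (O1(i := C))"
    if Cne: "C \<noteq> {}" for O1 C
  proof
    fix z assume "z \<in> (\<lambda>x. x(i := undefined)) ` PiE {..<n} O1"
    then obtain x where x: "x \<in> PiE {..<n} O1" "z = x(i := undefined)" by auto
    obtain y where y: "y \<in> C" using Cne by auto
    have "x(i := y) \<in> PiE {..<n} (O1(i := C))" by (rule upd_mem[OF x(1) i y])
    moreover have "z = (x(i := y))(i := undefined)" using x by simp
    ultimately show "z \<in> (\<lambda>x. x(i := undefined)) ` PiE {..<n} (O1(i := C))" by blast
  qed
  show ?thesis
    using sub[of B Om] sub[of "Om i" "Om(i := B)"] ne by (simp add: fun_upd_idem)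
qed

lemma avg_eq:
  fixes F :: "(nat \<Rightarrow> 'a) \<Rightarrow> real"
  assumes i: "i < n" and fin: "\<And>j. j < n \<Longrightarrow> finite (Om j)"
    and ne: "Om i \<noteq> {}" "B \<noteq> {}" "finite B"
    and inv: "\<And>x y. F (x(i := y)) = F x"
  shows "sum F (PiE {..<n} Om) / real (card (PiE {..<n} Om))
       = sum F (PiE {..<n} (Om(i := B))) / real (card (PiE {..<n} (Om(i := B))))"
proof -
  let ?h = "\<lambda>x::nat\<Rightarrow>'a. x(i := undefined)"
  let ?R = "?h ` PiE {..<n} Om"
  have fin': "\<And>j. j < n \<Longrightarrow> finite ((Om(i := B)) j)" using fin ne by auto
  have c1: "real (card (PiE {..<n} Om)) = real (card (Om i)) * real (card ?R)"
    using sum_fiber[where F="\<lambda>_. 1" and i=i and n=n and Om=Om] i fin by simp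
  have c2: "real (card (PiE {..<n} (Om(i := B)))) = real (card B) * real (card ?R)"
    using sum_fiber[where F="\<lambda>_. 1" and i=i and n=n and Om="Om(i := B)"] i fin' img_eq[where i=i and n=n and Om=Om and B=B, OF i ne(1,2)] by simp
  have s1: "sum F (PiE {..<n} Om) = real (card (Om i)) * sum F ?R"
    using sum_fiber[where F=F and i=i and n=n and Om=Om] i fin inv by simp
  have s2: "sum F (PiE {..<n} (Om(i := B))) = real (card B) * sum F ?R"
    using sum_fiber[where F=F and i=i and n=n and Om="Om(i := B)"] i fin' inv img_eq[where i=i and n=n and Om=Om and B=B, OF i ne(1,2)] by simp
  have "card (Om i) \<noteq> 0" "card B \<noteq> 0" using fin[OF i] ne by auto
  thus ?thesis unfolding c1 c2 s1 s2 by simp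
qed


lemma vr_const:
  assumes "finite A" "A \<noteq> {}" "\<And>y. y \<in> A \<Longrightarrow> v y = c"
  shows "vr A v = 0"
proof -
  have s: "sum v A = real (card A) * c" using assms(3) by (simp add: sum.cong[OF refl, of A v "\<lambda>_. c"])
  have "card A \<noteq> 0" using assms(1,2) by simp
  hence m: "sum v A / real (card A) = c" using s by simp
  have "(\<Sum>y\<in>A. (v y - c)^2) = 0" using assms(3) by (simp add: sum.neutral)
  thus ?thesis unfolding vr_def Let_def m by simp
qed

lemma AS_bound:
  assumes "WNC n Om f"
  shows "(\<forall>j<n. finite (Om j) \<and> Om j \<noteq> {}) \<Longrightarrow> (\<forall>x\<in>PiE {..<n} Om. 0 \<le> f x \<and> f x \<le> M)
     \<Longrightarrow> (\<forall>j<n. (real (card (Om j)) - 1) / real (card (Om j)) \<le> \<kappa>) \<Longrightarrow> 0 \<le> \<kappa>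
     \<Longrightarrow> avg_sensitivity n Om f \<le> M^2 * \<kappa>"
  using assms
proof (induction rule: WNC.induct)
  case (base n Om f)
  have "prod (\<lambda>j. card (Om j)) {..<n} = 1" using base(1) by (simp add: card_PiE)
  hence c1: "\<forall>j<n. card (Om j) = 1" using prod_eq_1_iff[of "{..<n}" "\<lambda>j. card (Om j)"] by simp
  have "influence n Om f j = 0" if j: "j < n" for j
  proof -
    have "card (Om j) = 1" using c1 j by simp
    then obtain c where c: "Om j = {c}" by (auto simp: card_1_singleton_iff)
    have "coord_var Om f j x = 0" for x unfolding coord_var_def c Let_def by simp
    thus ?thesis unfolding influence_def by simp
  qed
  hence "avg_sensitivity n Om f = 0" unfolding avg_sensitivity_def by simp
  thus ?case using base by simp
next
  case (step n Om i a f b)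
  note ne = step.prems(1) and bd = step.prems(2) and kap = step.prems(3) and kap0 = step.prems(4)
  define Om' where "Om' = Om(i := Om i - {a})"
  define S where "S = PiE {..<n} Om"
  define S' where "S' = PiE {..<n} Om'"
  define k where "k = real (card (Om i))"
  define p where "p = 1 / k"
  have i: "i < n" and a: "a \<in> Om i" and wc: "weakly_canalizing n Om f i a b" using step.hyps by auto
  have k2: "card (Om i) \<ge> 2" using step.hyps by auto
  have kge: "k \<ge> 2" using k2 by (simp add: k_def)
  have fin: "\<And>j. j < n \<Longrightarrow> finite (Om j)" using ne by auto
  have finS: "finite S" unfolding S_def using fin by (intro finite_PiE) auto
  have cOm'i: "card (Om i - {a}) = card (Om i) - 1" using a fin[OF i] by simp
  have "card (Om i - {a}) \<noteq> 0" using cOm'i k2 by simp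
  hence ne'i: "Om i - {a} \<noteq> {}" by (metis card.empty)
  have ne': "\<forall>j<n. finite (Om' j) \<and> Om' j \<noteq> {}" using ne ne'i by (auto simp: Om'_def)
  have SS': "S' \<subseteq> S" unfolding S_def S'_def Om'_def by (rule PiE_mono) auto
  have bd': "\<forall>x\<in>PiE {..<n} Om'. 0 \<le> f x \<and> f x \<le> M" using bd SS' by (auto simp: S_def S'_def)
  have kap': "\<forall>j<n. (real (card (Om' j)) - 1) / real (card (Om' j)) \<le> \<kappa>"
  proof (intro allI impI)
    fix j assume j: "j < n"
    show "(real (card (Om' j)) - 1) / real (card (Om' j)) \<le> \<kappa>"
    proof (cases "j = i")
      case True
      have "real (card (Om' j)) = k - 1" using True cOm'i k2 by (simp add: Om'_def k_def of_nat_diff)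
      moreover have "(k - 1 - 1) / (k - 1) \<le> (k - 1) / k" using kge by (simp add: field_simps)
      moreover have "(k - 1) / k \<le> \<kappa>" using kap i by (simp add: k_def)
      ultimately show ?thesis by simp
    next
      case False thus ?thesis using kap j by (simp add: Om'_def)
    qed
  qed
  have IH: "avg_sensitivity n Om' f \<le> M^2 * \<kappa>"
    using step.IH ne' bd' kap' kap0 unfolding Om'_def by blast
  let ?h = "\<lambda>x::nat\<Rightarrow>_. x(i := undefined)"
  have fin': "\<And>j. j < n \<Longrightarrow> finite (Om' j)" using ne' by auto
  have cS: "real (card S) = k * real (card (?h ` S))"
    using sum_fiber[where F="\<lambda>_. 1" and i=i and n=n and Om=Om] i fin by (simp add: S_def k_def)
  have cS': "real (card S') = (k - 1) * real (card (?h ` S))"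
    using sum_fiber[where F="\<lambda>_. 1" and i=i and n=n and Om=Om'] i fin'
      img_eq[where i=i and n=n and Om=Om and B="Om i - {a}", OF i _ ne'i] ne i cOm'i k2
    by (simp add: S_def S'_def Om'_def k_def of_nat_diff)
  have Sne: "S \<noteq> {}" unfolding S_def using ne by (simp add: PiE_eq_empty_iff)
  hence cSpos: "real (card S) > 0" using finS by (simp add: card_gt_0_iff)
  have pk: "(1 - p) * k = k - 1" using kge by (simp add: p_def field_simps)
  have cS'S: "real (card S') = (1 - p) * real (card S)"
    unfolding cS cS' mult.assoc[symmetric] pk ..
  have p1: "1 - p > 0" using kge by (simp add: p_def field_simps)
  have infl_j: "influence n Om f j = (1 - p) * influence n Om' f j" if j: "j < n" "j \<noteq> i" for j
  proof -
    have "sum (coord_var Om f j) S = sum (coord_var Om' f j) S'"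
    proof (rule sum.mono_neutral_cong_right[OF finS SS'])
      show "\<forall>x\<in>S - S'. coord_var Om f j x = 0"
      proof
        fix x assume x: "x \<in> S - S'"
        have xi: "x i = a"
        proof (rule ccontr)
          assume "x i \<noteq> a"
          hence "x \<in> S'" using x by (auto simp: S_def S'_def Om'_def PiE_iff)
          thus False using x by simp
        qed
        have "f (x(j := y)) = b" if y: "y \<in> Om j" for y
        proof -
          have "x(j := y) \<in> PiE {..<n} (Om(j := Om j))" using x y j by (intro upd_mem) (auto simp: S_def)
          moreover have "(x(j := y)) i = a" using xi j by simp
          ultimately show ?thesis using wc unfolding weakly_canalizing_def by auto
        qed
        thus "coord_var Om f j x = 0" unfolding coord_var_vr using fin[OF j(1)] ne j(1)
          by (intro vr_const) auto
      qed
      show "coord_var Om f j x = coord_var Om' f j x" for x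
        using j by (simp add: coord_var_def Om'_def)
    qed
    moreover have "(1 - p) * (X / ((1 - p) * real (card S))) = X / real (card S)" for X
      using p1 cSpos by simp
    ultimately show ?thesis unfolding influence_def S_def[symmetric] S'_def[symmetric] cS'S
      by metis
  qed
  have infl_i: "influence n Om f i \<le> (1 - p) * influence n Om' f i + p * (1 - p) * M^2"
  proof -
    have "sum (coord_var Om f i) S \<le> sum (\<lambda>x. (1 - p) * coord_var Om' f i x + p * (1 - p) * M^2) S"
    proof (rule sum_mono)
      fix x assume x: "x \<in> S"
      have "vr (Om i) (\<lambda>y. f (x(i := y))) \<le> (1 - p) * vr (Om i - {a}) (\<lambda>y. f (x(i := y))) + p * (1 - p) * M^2"
      proof -
        have "\<And>y. y \<in> Om i \<Longrightarrow> 0 \<le> f (x(i := y)) \<and> f (x(i := y)) \<le> M"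
        proof -
          fix y assume "y \<in> Om i"
          hence "x(i := y) \<in> PiE {..<n} (Om(i := Om i))" using x i by (intro upd_mem) (auto simp: S_def)
          thus "0 \<le> f (x(i := y)) \<and> f (x(i := y)) \<le> M" using bd by auto
        qed
        from vr_split[OF fin[OF i] a k2 this] show ?thesis by (simp add: p_def k_def)
      qed
      thus "coord_var Om f i x \<le> (1 - p) * coord_var Om' f i x + p * (1 - p) * M^2"
        by (simp add: coord_var_vr Om'_def)
    qed
    also have "\<dots> = (1 - p) * sum (coord_var Om' f i) S + real (card S) * (p * (1 - p) * M^2)"
      by (simp add: sum.distrib sum_distrib_left)
    finally have A: "sum (coord_var Om f i) S \<le> (1 - p) * sum (coord_var Om' f i) S + real (card S) * (p * (1 - p) * M^2)" .
    have inv: "coord_var Om' f i (x(i := y)) = coord_var Om' f i x" for x y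
      by (simp add: coord_var_def)
    have B: "sum (coord_var Om' f i) S / real (card S) = influence n Om' f i"
      unfolding influence_def S_def
      using avg_eq[where F="coord_var Om' f i" and i=i and n=n and Om=Om and B="Om i - {a}"] i fin ne'i ne inv
      by (simp add: Om'_def)
    have "influence n Om f i = sum (coord_var Om f i) S / real (card S)" by (simp add: influence_def S_def)
    also have "\<dots> \<le> ((1 - p) * sum (coord_var Om' f i) S + real (card S) * (p * (1 - p) * M^2)) / real (card S)"
      using A cSpos by (simp add: divide_right_mono)
    also have "\<dots> = (1 - p) * (sum (coord_var Om' f i) S / real (card S)) + p * (1 - p) * M^2"
      using cSpos by (simp add: field_simps)
    finally show ?thesis using B by simp
  qed
  have "avg_sensitivity n Om f \<le> (\<Sum>j<n. (1 - p) * influence n Om' f j + (if j = i then p * (1 - p) * M^2 else 0))"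
    unfolding avg_sensitivity_def
  proof (rule sum_mono)
    fix j assume "j \<in> {..<n}"
    thus "influence n Om f j \<le> (1 - p) * influence n Om' f j + (if j = i then p * (1 - p) * M^2 else 0)"
      using infl_i infl_j by (cases "j = i") auto
  qed
  also have "\<dots> = (1 - p) * avg_sensitivity n Om' f + p * (1 - p) * M^2"
    using i by (simp add: sum.distrib sum_distrib_left avg_sensitivity_def)
  also have "\<dots> \<le> (1 - p) * (M^2 * \<kappa>) + p * (M^2 * \<kappa>)"
  proof -
    have p01: "0 \<le> p" "p \<le> 1" using kge by (auto simp: p_def)
    have "(k - 1) / k \<le> \<kappa>" using kap i by (simp add: k_def)
    moreover have "1 - p = (k - 1) / k" using kge by (simp add: p_def field_simps)
    ultimately have "1 - p \<le> \<kappa>" by simp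
    hence "p * (1 - p) * M^2 \<le> p * (M^2 * \<kappa>)"
      using p01 by (simp add: mult_left_mono mult_right_mono mult.assoc mult.commute)
    moreover have "(1 - p) * avg_sensitivity n Om' f \<le> (1 - p) * (M^2 * \<kappa>)"
      using IH p01 by (simp add: mult_left_mono)
    ultimately show ?thesis by linarith
  qed
  also have "\<dots> = M^2 * \<kappa>" by (simp add: algebra_simps)
  finally show ?case .
qed


lemma WNC_hered:
  fixes Om :: "nat \<Rightarrow> 'a set"
  assumes ne: "\<forall>j<n. finite (Om j) \<and> Om j \<noteq> {}"
    and crit: "\<And>B. \<forall>j<n. B j \<subseteq> Om j \<and> B j \<noteq> {} \<Longrightarrow> card (PiE {..<n} B) > 1 \<Longrightarrow>
        \<exists>i<n. \<exists>a\<in>B i. card (B i) \<ge> 2 \<and> (\<exists>b. weakly_canalizing n B f i a b)"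
  shows "WNC n Om f"
proof -
  have "\<forall>B. card (PiE {..<n} B) = m \<longrightarrow> (\<forall>j<n. B j \<subseteq> Om j \<and> B j \<noteq> {}) \<longrightarrow> WNC n B f" for m
  proof (induction m rule: less_induct)
    case (less m)
    show ?case
    proof (intro allI impI)
      fix B assume m: "card (PiE {..<n} B) = m" and sub: "\<forall>j<n. B j \<subseteq> Om j \<and> B j \<noteq> {}"
      have finBj: "\<And>j. j < n \<Longrightarrow> finite (B j)" using sub ne by (meson finite_subset)
      have finB: "finite (PiE {..<n} B)" using finBj by (intro finite_PiE) auto
      have neB: "PiE {..<n} B \<noteq> {}" using sub by (simp add: PiE_eq_empty_iff)
      show "WNC n B f"
      proof (cases "card (PiE {..<n} B) = 1")
        case True thus ?thesis by (rule WNC.base)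
      next
        case False
        have "card (PiE {..<n} B) \<noteq> 0" using finB neB by simp
        hence gt: "card (PiE {..<n} B) > 1" using False by linarith
        obtain i a b where i: "i < n" "a \<in> B i" "card (B i) \<ge> 2" "weakly_canalizing n B f i a b"
          using crit[OF sub gt] by blast
        define B' where "B' = B(i := B i - {a})"
        have "card (B i - {a}) = card (B i) - 1" using i finBj by simp
        hence "card (B i - {a}) \<noteq> 0" using i by simp
        hence "B i - {a} \<noteq> {}" by (metis card.empty)
        hence sub': "\<forall>j<n. B' j \<subseteq> Om j \<and> B' j \<noteq> {}" using sub by (auto simp: B'_def)
        obtain x0 where x0: "x0 \<in> PiE {..<n} B" using neB by auto
        have "x0(i := a) \<in> PiE {..<n} (B(i := B i))" using upd_mem[OF x0 i(1) i(2)] .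
        hence xa: "x0(i := a) \<in> PiE {..<n} B" by simp
        have xa': "x0(i := a) \<notin> PiE {..<n} B'" using i(1) by (auto simp: B'_def PiE_iff)
        have "PiE {..<n} B' \<subseteq> PiE {..<n} B" unfolding B'_def by (rule PiE_mono) auto
        hence "PiE {..<n} B' \<subset> PiE {..<n} B" using xa xa' by blast
        hence "card (PiE {..<n} B') < card (PiE {..<n} B)" by (rule psubset_card_mono[OF finB])
        hence "card (PiE {..<n} B') < m" using m by simp
        hence "WNC n B' f" using less.IH sub' by blast
        thus ?thesis using WNC.step[OF gt i(1) i(3) i(2) i(4)] by (simp add: B'_def)
      qed
    qed
  qed
  thus ?thesis using ne by blast
qed

lemma const_crit:
  assumes ne: "\<forall>j<n. finite (B j) \<and> B j \<noteq> {}" and gt: "card (PiE {..<n} B) > 1"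
    and cst: "\<forall>x\<in>PiE {..<n} B. f x = c0"
  shows "\<exists>i<n. \<exists>a\<in>B i. card (B i) \<ge> 2 \<and> (\<exists>b. weakly_canalizing n B f i a b)"
proof -
  have "\<exists>j<n. card (B j) \<ge> 2"
  proof (rule ccontr)
    assume "\<not> ?thesis"
    hence "\<forall>j\<in>{..<n}. card (B j) = 1"
    proof (intro ballI)
      fix j assume j: "j \<in> {..<n}" and H: "\<not> (\<exists>j<n. card (B j) \<ge> 2)"
      have "card (B j) \<noteq> 0" using ne j by simp
      moreover have "\<not> card (B j) \<ge> 2" using H j by auto
      ultimately show "card (B j) = 1" by linarith
    qed
    hence "card (PiE {..<n} B) = 1" by (simp add: card_PiE prod.neutral)
    thus False using gt by simp
  qed
  then obtain j where j: "j < n" "card (B j) \<ge> 2" by blast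
  obtain a where a: "a \<in> B j" using ne j by blast
  have "weakly_canalizing n B f j a c0" unfolding weakly_canalizing_def using cst by blast
  thus ?thesis using j a by blast
qed

lemma NC_bounds:
  assumes nc: "nested_canalizing k n g" and x: "x \<in> PiE {..<n} (\<lambda>_. {..<k})"
  shows "g x < k"
proof -
  obtain \<sigma> A c where cr: "\<forall>r\<le>n. c r < k" and
    H: "\<forall>x\<in>PiE {..<n} (\<lambda>_. {..<k}).
           (\<forall>r<n. (\<forall>s<r. x (\<sigma> s) \<notin> A s) \<and> x (\<sigma> r) \<in> A r \<longrightarrow> g x = c r) \<and>
           ((\<forall>r<n. x (\<sigma> r) \<notin> A r) \<longrightarrow> g x = c n)"
    using nc unfolding nested_canalizing_def by blast
  show ?thesis
  proof (cases "\<exists>r. r < n \<and> x (\<sigma> r) \<in> A r")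
    case True
    then obtain r where r: "r < n \<and> x (\<sigma> r) \<in> A r" "\<forall>s<r. \<not> (s < n \<and> x (\<sigma> s) \<in> A s)"
      using exists_least_iff[THEN iffD1, OF True] by blast
    have "\<forall>s<r. x (\<sigma> s) \<notin> A s" using r by auto
    hence "g x = c r" using H x r by blast
    thus ?thesis using cr r by auto
  next
    case False
    hence "g x = c n" using H x by blast
    thus ?thesis using cr by auto
  qed
qed

lemma NC_crit:
  assumes nc: "nested_canalizing k n g"
    and sub: "\<forall>j<n. B j \<subseteq> {..<k} \<and> B j \<noteq> {}" and gt: "card (PiE {..<n} B) > 1"
  shows "\<exists>i<n. \<exists>a\<in>B i. card (B i) \<ge> 2 \<and> (\<exists>b. weakly_canalizing n B (\<lambda>x. real (g x)) i a b)"
proof -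
  obtain \<sigma> A c where \<sigma>: "\<sigma> permutes {..<n}" and
    H: "\<forall>x\<in>PiE {..<n} (\<lambda>_. {..<k}).
           (\<forall>r<n. (\<forall>s<r. x (\<sigma> s) \<notin> A s) \<and> x (\<sigma> r) \<in> A r \<longrightarrow> g x = c r) \<and>
           ((\<forall>r<n. x (\<sigma> r) \<notin> A r) \<longrightarrow> g x = c n)"
    using nc unfolding nested_canalizing_def by blast
  have \<sigma>n: "\<And>r. r < n \<Longrightarrow> \<sigma> r < n" using permutes_in_image[OF \<sigma>] by simp
  have ne: "\<forall>j<n. finite (B j) \<and> B j \<noteq> {}" using sub by (meson finite_lessThan finite_subset)
  have inbox: "\<And>x. x \<in> PiE {..<n} B \<Longrightarrow> x \<in> PiE {..<n} (\<lambda>_. {..<k})"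
    using PiE_mono[of "{..<n}" B "\<lambda>_. {..<k}"] sub by auto
  have xin: "\<And>x j. x \<in> PiE {..<n} B \<Longrightarrow> j < n \<Longrightarrow> x j \<in> B j" by (auto simp: PiE_iff)
  show ?thesis
  proof (cases "\<exists>r. r < n \<and> B (\<sigma> r) \<inter> A r \<noteq> {}")
    case True
    then obtain r where r: "r < n" "B (\<sigma> r) \<inter> A r \<noteq> {}" and rl: "\<forall>s<r. \<not> (s < n \<and> B (\<sigma> s) \<inter> A s \<noteq> {})"
      using exists_least_iff[THEN iffD1, OF True] by blast
    obtain a where a: "a \<in> B (\<sigma> r)" "a \<in> A r" using r by blast
    have canal: "g x = c r" if x: "x \<in> PiE {..<n} B" "x (\<sigma> r) = a" for x
    proof -
      have "\<forall>s<r. x (\<sigma> s) \<notin> A s"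
      proof (intro allI impI)
        fix s assume s: "s < r"
        hence "x (\<sigma> s) \<in> B (\<sigma> s)" using xin[OF x(1) \<sigma>n] r by simp
        moreover have "B (\<sigma> s) \<inter> A s = {}" using rl s r by auto
        ultimately show "x (\<sigma> s) \<notin> A s" by blast
      qed
      thus ?thesis using H inbox[OF x(1)] r x(2) a by blast
    qed
    show ?thesis
    proof (cases "card (B (\<sigma> r)) \<ge> 2")
      case True
      have "weakly_canalizing n B (\<lambda>x. real (g x)) (\<sigma> r) a (real (c r))"
        unfolding weakly_canalizing_def using canal by auto
      thus ?thesis using True a \<sigma>n[OF r(1)] by blast
    next
      case False
      have "finite (B (\<sigma> r))" using ne \<sigma>n[OF r(1)] by blast
      moreover have "card (B (\<sigma> r)) \<noteq> 0" using ne \<sigma>n[OF r(1)] calculation by simp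
      ultimately have "card (B (\<sigma> r)) = 1" using False by linarith
      then obtain z where "B (\<sigma> r) = {z}" by (auto simp: card_1_singleton_iff)
      hence Bs: "B (\<sigma> r) = {a}" using a by simp
      have "\<forall>x\<in>PiE {..<n} B. real (g x) = real (c r)"
      proof
        fix x assume x: "x \<in> PiE {..<n} B"
        have "x (\<sigma> r) = a" using xin[OF x \<sigma>n[OF r(1)]] Bs by simp
        thus "real (g x) = real (c r)" using canal x by simp
      qed
      thus ?thesis by (rule const_crit[OF ne gt])
    qed
  next
    case False
    have "\<forall>x\<in>PiE {..<n} B. real (g x) = real (c n)"
    proof
      fix x assume x: "x \<in> PiE {..<n} B"
      have "\<forall>r<n. x (\<sigma> r) \<notin> A r"
      proof (intro allI impI)
        fix r assume r: "r < n"
        have "x (\<sigma> r) \<in> B (\<sigma> r)" using xin[OF x \<sigma>n[OF r]] .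
        thus "x (\<sigma> r) \<notin> A r" using False r by blast
      qed
      thus "real (g x) = real (c n)" using H inbox[OF x] by simp
    qed
    thus ?thesis by (rule const_crit[OF ne gt])
  qed
qed

lemma final_ineq:
  fixes M \<kappa> :: real
  assumes "0 \<le> \<kappa>" "\<kappa> < 1"
  shows "M^2 * \<kappa> \<le> M^2 / (4 * (1 - \<kappa>))"
proof -
  have "0 \<le> (2 * \<kappa> - 1)^2" by simp
  hence h: "\<kappa> * (4 * (1 - \<kappa>)) \<le> 1" by (simp add: power2_eq_square algebra_simps)
  have "M^2 * \<kappa> * (4 * (1 - \<kappa>)) = M^2 * (\<kappa> * (4 * (1 - \<kappa>)))" by simp
  also have "\<dots> \<le> M^2 * 1" using h by (intro mult_left_mono) auto
  finally have "M^2 * \<kappa> * (4 * (1 - \<kappa>)) \<le> M^2" by simp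
  moreover have "4 * (1 - \<kappa>) > 0" using assms by simp
  ultimately show ?thesis by (simp add: pos_le_divide_eq)
qed

theorem theorem1:
  fixes n :: nat and Om :: "nat \<Rightarrow> 'a set" and f :: "(nat \<Rightarrow> 'a) \<Rightarrow> real" and M :: real
  assumes "n \<ge> 1"
    and "\<And>i. i < n \<Longrightarrow> finite (Om i) \<and> Om i \<noteq> {}"
    and "M \<ge> 0"
    and "\<And>x. x \<in> prodsp n Om \<Longrightarrow> 0 \<le> f x \<and> f x \<le> M"
    and "WNC n Om f"
  shows "avg_sensitivity n Om f
           \<le> M^2 / (4 * (1 - Max ((\<lambda>i. (real (card (Om i)) - 1) / real (card (Om i))) ` {..<n})))
         \<and> (\<forall>(k::nat) (g :: (nat \<Rightarrow> nat) \<Rightarrow> nat). k \<ge> 2 \<longrightarrow> nested_canalizing k n g \<longrightarrow>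
              avg_sensitivity n (\<lambda>_. {..<k}) (\<lambda>x. real (g x))
                \<le> (real k - 1)^2 / (4 * (1 - (real k - 1) / real k)))"
proof
  define K where "K = Max ((\<lambda>i. (real (card (Om i)) - 1) / real (card (Om i))) ` {..<n})"
  have fin: "finite ((\<lambda>i. (real (card (Om i)) - 1) / real (card (Om i))) ` {..<n})" by simp
  have nen: "(\<lambda>i. (real (card (Om i)) - 1) / real (card (Om i))) ` {..<n} \<noteq> {}" using assms(1) by (simp add: lessThan_empty_iff)
  have le: "\<forall>j<n. (real (card (Om j)) - 1) / real (card (Om j)) \<le> K"
    unfolding K_def using Max_ge[OF fin] by auto
  have "K \<in> (\<lambda>i. (real (card (Om i)) - 1) / real (card (Om i))) ` {..<n}"
    unfolding K_def using Max_in[OF fin nen] .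
  then obtain i where i: "i < n" "K = (real (card (Om i)) - 1) / real (card (Om i))" by auto
  have ci: "real (card (Om i)) \<ge> 1" using assms(2)[OF i(1)] by (simp add: Suc_le_eq card_gt_0_iff)
  have K0: "0 \<le> K" using i ci by simp
  have "K = 1 - 1 / real (card (Om i))" using i ci by (simp add: field_simps)
  moreover have "1 / real (card (Om i)) > 0" using ci by simp
  ultimately have K1: "K < 1" by simp
  have "avg_sensitivity n Om f \<le> M^2 * K"
    using AS_bound[OF assms(5)] assms(2,4) le K0 by blast
  also have "\<dots> \<le> M^2 / (4 * (1 - K))" using final_ineq[OF K0 K1] .
  finally show "avg_sensitivity n Om f
           \<le> M^2 / (4 * (1 - Max ((\<lambda>i. (real (card (Om i)) - 1) / real (card (Om i))) ` {..<n})))"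
    unfolding K_def .
next
  show "\<forall>(k::nat) (g :: (nat \<Rightarrow> nat) \<Rightarrow> nat). k \<ge> 2 \<longrightarrow> nested_canalizing k n g \<longrightarrow>
              avg_sensitivity n (\<lambda>_. {..<k}) (\<lambda>x. real (g x))
                \<le> (real k - 1)^2 / (4 * (1 - (real k - 1) / real k))"
  proof (intro allI impI)
    fix k :: nat and g :: "(nat \<Rightarrow> nat) \<Rightarrow> nat"
    assume k: "k \<ge> 2" and nc: "nested_canalizing k n g"
    have ne: "\<forall>j<n. finite ((\<lambda>_::nat. {..<k}) j) \<and> (\<lambda>_::nat. {..<k}) j \<noteq> {}" using k by (auto simp: lessThan_empty_iff)
    have W: "WNC n (\<lambda>_. {..<k}) (\<lambda>x. real (g x))"
      by (rule WNC_hered[OF ne]) (rule NC_crit[OF nc], auto)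
    have bd: "\<forall>x\<in>PiE {..<n} (\<lambda>_. {..<k}). 0 \<le> real (g x) \<and> real (g x) \<le> real k - 1"
    proof
      fix x assume "x \<in> PiE {..<n} (\<lambda>_. {..<k})"
      hence "g x < k" using NC_bounds[OF nc] by blast
      hence "g x + 1 \<le> k" by simp
      hence "real (g x) + 1 \<le> real k" by linarith
      thus "0 \<le> real (g x) \<and> real (g x) \<le> real k - 1" by simp
    qed
    have kk: "\<forall>j<n. (real (card ((\<lambda>_::nat. {..<k}) j)) - 1) / real (card ((\<lambda>_::nat. {..<k}) j)) \<le> (real k - 1) / real k"
      by simp
    have K0: "0 \<le> (real k - 1) / real k" using k by simp
    have K1: "(real k - 1) / real k < 1" using k by simp
    have "avg_sensitivity n (\<lambda>_. {..<k}) (\<lambda>x. real (g x)) \<le> (real k - 1)^2 * ((real k - 1) / real k)"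
      using AS_bound[OF W ne bd kk K0] .
    also have "\<dots> \<le> (real k - 1)^2 / (4 * (1 - (real k - 1) / real k))" using final_ineq[OF K0 K1] .
    finally show "avg_sensitivity n (\<lambda>_. {..<k}) (\<lambda>x. real (g x))
                \<le> (real k - 1)^2 / (4 * (1 - (real k - 1) / real k))" .
  qed
qed

end
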